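(* Let $n \geq 2$ and let $x_1, \dots, x_n$ be real numbers with mean $\mu = \frac{1}{n}\sum_{i=1}^n x_i > 0$ and variance $\sigma^2 = \frac{1}{n}\sum_{i=1}^n (x_i-\mu)^2$, where $\sigma \ge 0$. (a) If $0 \leq \sigma/\mu < 1/\sqrt{n-1}$, then each $x_i$ is positive and $$\left(\mu - \sigma\sqrt{n-1}\right)\left(\mu + \frac{\sigma}{\sqrt{n-1}}\right)^{n-1} \;\leq\; x_1 x_2 \cdots x_n \;\leq\; \left(\mu + \sigma\sqrt{n-1}\right)\left(\mu - \frac{\sigma}{\sqrt{n-1}}\right)^{n-1}.$$ Both bounds are sharp: for every $\mu>0$ and $\sigma$ with $0 \le \sigma/\mu < 1/\sqrt{n-1}$, each bound is attained by some sequence of $n$ real numbers with mean $\mu$ and variance $\sigma^2$. (b) If every $x_i$ is positive, then $0 \leq \sigma/\mu < \sqrt{n-1}$ and the two inequalities displayed in (a) still hold. The upper bound is sharp: for every $\mu>0$ and $\sigma$ with $0\le \sigma/\mu<\sqrt{n-1}$ it is attained by some positive sequence with mean $\mu$ and variance $\sigma^2$. For $1/\sqrt{n-1} < \sigma/\mu < \sqrt{n-1}$ the lower bound expression $(\mu - \sigma\sqrt{n-1})(\mu + \sigma/\sqrt{n-1})^{n-1}$ is negative; replacing the lower bound by $\max\left\{0, (\mu - \sigma\sqrt{n-1})(\mu + \sigma/\sqrt{n-1})^{n-1}\right\}$, the lower inequality is best possible on the entire range $0 \le \sigma/\mu < \sqrt{n-1}$, i.e. this quantity equals the infimum of $x_1\cdots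 x_n$ over all positive sequences of length $n$ with mean $\mu$ and variance $\sigma^2$.
   Context: Mean and variance are the population mean and variance: $\mu = \frac1n\sum x_i$, $\sigma^2 = \frac1n \sum (x_i-\mu)^2$, with $\sigma$ the nonnegative square root. *)

theory Defs
  imports Complex_Main
begin

text \<open>A sequence x_1..x_n is represented by x :: nat => real on indices {..<n}.\<close>

definition mean :: "nat \<Rightarrow> (nat \<Rightarrow> real) \<Rightarrow> real" where
  "mean n x = (\<Sum>i<n. x i) / real n"

definition variance :: "nat \<Rightarrow> (nat \<Rightarrow> real) \<Rightarrow> real" where
  "variance n x = (\<Sum>i<n. (x i - mean n x)^2) / real n"

definition sdev :: "nat \<Rightarrow> (nat \<Rightarrow> real) \<Rightarrow> real" where
  "sdev n x = sqrt (variance n x)"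

definition lower_bd :: "nat \<Rightarrow> real \<Rightarrow> real \<Rightarrow> real" where
  "lower_bd n \<mu> \<sigma> = (\<mu> - \<sigma> * sqrt (real n - 1)) * (\<mu> + \<sigma> / sqrt (real n - 1)) ^ (n - 1)"

definition upper_bd :: "nat \<Rightarrow> real \<Rightarrow> real \<Rightarrow> real" where
  "upper_bd n \<mu> \<sigma> = (\<mu> + \<sigma> * sqrt (real n - 1)) * (\<mu> - \<sigma> / sqrt (real n - 1)) ^ (n - 1)"

end

theory Submission imports Defs "HOL-Analysis.Analysis" begin

lemma triple_core:
  fixes y1 y2 y3 :: real
  assumes "y1 \<le> y2" "y2 \<le> y3" "y1 < y2" "y1 + y2 + y3 = 0"
  shows "y1*y2*y3 < (sqrt (2*(y1^2+y2^2+y3^2)/3))^3/4"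
proof -
  define T where "T = y1^2+y2^2+y3^2"
  define R where "R = sqrt (2*T/3)"
  have y3: "y3 = -y1-y2" using assms by simp
  have Tpos: "T > 0" unfolding T_def using assms
    by (smt (verit) power2_less_eq_zero_iff zero_le_power2)
  have Rpos: "R > 0" unfolding R_def using Tpos by simp
  have R2: "R^2 = 2*T/3" unfolding R_def using Tpos by simp
  have R6: "(R^3/4)^2 = T^3/54"
  proof -
    have "(R^3/4)^2 = (R^2)^3/16" by (simp add: power_mult_distrib power_divide flip: power_mult) 
    also have "\<dots> = T^3/54" unfolding R2 by (simp add: power_divide power_mult_distrib)
    finally show ?thesis .
  qed
  show ?thesis
  proof (cases "y1*y2*y3 \<le> 0")
    case True
    have "R^3 > 0" using Rpos by simp
    then show ?thesis unfolding T_def[symmetric] R_def[symmetric] using True by linarith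
  next
    case False
    have "y2 < y3"
    proof (rule ccontr)
      assume "\<not> y2 < y3"
      then have "y3 = y2" using assms by simp
      then have "y1 = -2*y2" using assms by simp
      then have "y2 > 0" using assms by simp
      then have "y1*y2*y3 < 0" using \<open>y3 = y2\<close> \<open>y1 = -2*y2\<close>
        by (simp add: mult_neg_pos)
      then show False using False by simp
    qed
    have disc: "T^3 - 54*(y1*y2*y3)^2 = 2*((y1-y2)^2*(y1-y3)^2*(y2-y3)^2)"
      unfolding T_def y3 by algebra
    have "(y1-y2)^2*(y1-y3)^2*(y2-y3)^2 > 0"
      using assms \<open>y2 < y3\<close> by simp
    then have "(y1*y2*y3)^2 < (R^3/4)^2" using disc R6 by simp
    then show ?thesis unfolding T_def[symmetric] R_def[symmetric]
      using Rpos False by (smt (verit) power_less_imp_less_base zero_le_divide_iff zero_le_power)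
  qed
qed

lemma triple_up:
  fixes a b c :: real
  assumes "a \<le> b" "b \<le> c" "a < b"
  shows "\<exists>p q. 2*p + q = a+b+c \<and> 2*p^2 + q^2 = a^2+b^2+c^2 \<and> a \<le> p \<and> p \<le> q \<and> a*b*c < p*p*q"
proof -
  define m where "m = (a+b+c)/3"
  define y1 y2 y3 where "y1 = a - m" and "y2 = b - m" and "y3 = c - m"
  define T where "T = y1^2+y2^2+y3^2"
  define R where "R = sqrt (2*T/3)"
  have s0: "y1+y2+y3 = 0" unfolding y1_def y2_def y3_def m_def by (simp add: field_simps)
  have y3e: "y3 = -y1-y2" using s0 by simp
  have core: "y1*y2*y3 < R^3/4" unfolding R_def T_def
    by (rule triple_core[OF _ _ _ s0]) (use assms in \<open>auto simp: y1_def y2_def y3_def\<close>)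
  have T0: "T \<ge> 0" unfolding T_def by simp
  have R0: "R \<ge> 0" unfolding R_def using T0 by simp
  have R2: "R^2 = 2*T/3" unfolding R_def using T0 by simp
  define p q where "p = m - R/2" and "q = m + R"
  have a: "a = m + y1" and b: "b = m + y2" and c: "c = m + y3" unfolding y1_def y2_def y3_def by auto
  have e1: "2*p + q = a+b+c" unfolding p_def q_def by (simp add: m_def field_simps)
  have e2: "2*p^2 + q^2 = a^2+b^2+c^2"
  proof -
    have "2*p^2 + q^2 = 3*m^2 + 3/2*R^2" unfolding p_def q_def by (simp add: power2_eq_square algebra_simps)
    also have "\<dots> = 3*m^2 + T" using R2 by simp
    also have "\<dots> = a^2+b^2+c^2" unfolding a b c T_def y3e by algebra
    finally show ?thesis .
  qed
  have y1n: "y1 \<le> 0" using s0 assms unfolding y1_def y2_def y3_def by linarith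
  have "T \<le> 6*y1^2"
  proof -
    have "(y2 - y1)*(y3 - y1) \<ge> 0" using assms unfolding y1_def y2_def y3_def by simp
    moreover have "(y2 - y1)*(y3 - y1) = y2*y3 + 2*y1^2" unfolding y3e by algebra
    moreover have "T = 2*y1^2 - 2*y2*y3" unfolding T_def y3e by algebra
    ultimately show ?thesis by simp
  qed
  then have "R^2 \<le> (-2*y1)^2" using R2 by (simp add: power2_eq_square)
  then have "R \<le> -2*y1" by (rule power2_le_imp_le) (use y1n in simp)
  then have up: "a \<le> p" unfolding p_def a by simp
  have pq: "p \<le> q" unfolding p_def q_def using R0 by simp
  have prod: "p*p*q - a*b*c = R^3/4 - y1*y2*y3"
  proof -
    have "a*b*c = m^3 + m*(y1*y2+y1*y3+y2*y3) + y1*y2*y3" unfolding a b c y3e by algebra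
    moreover have "y1*y2+y1*y3+y2*y3 = -T/2" unfolding T_def y3e by algebra
    moreover have "p*p*q = m^3 - 3/4*m*R^2 + R^3/4" unfolding p_def q_def
      by (simp add: field_simps power3_eq_cube power2_eq_square)
    ultimately have A: "a*b*c = m^3 - m*(T/2) + y1*y2*y3" and B: "p*p*q = m^3 - m*(3/4*R^2) + R^3/4"
      by simp_all
    have "3/4*R^2 = T/2" using R2 by simp
    then show ?thesis using A B by simp
  qed
  show ?thesis using e1 e2 up pq prod core by (intro exI[of _ p] exI[of _ q]) auto
qed

lemma triple_low:
  fixes a b c :: real
  assumes "a \<le> b" "b \<le> c" "b < c"
  shows "\<exists>p q. p + 2*q = a+b+c \<and> p^2 + 2*q^2 = a^2+b^2+c^2 \<and> p*q*q < a*b*c"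
proof -
  define m where "m = (a+b+c)/3"
  define y1 y2 y3 where "y1 = a - m" and "y2 = b - m" and "y3 = c - m"
  define T where "T = y1^2+y2^2+y3^2"
  define R where "R = sqrt (2*T/3)"
  have s0: "y1+y2+y3 = 0" unfolding y1_def y2_def y3_def m_def by (simp add: field_simps)
  have y3e: "y3 = -y1-y2" using s0 by simp
  have s0': "(-y3)+(-y2)+(-y1) = 0" using s0 by simp
  have core0: "(-y3)*(-y2)*(-y1) < (sqrt (2*((-y3)^2+(-y2)^2+(-y1)^2)/3))^3/4"
    by (rule triple_core[OF _ _ _ s0']) (use assms in \<open>auto simp: y1_def y2_def y3_def\<close>)
  have core: "-(y1*y2*y3) < R^3/4" using core0 unfolding R_def T_def by (simp add: algebra_simps)
  have T0: "T \<ge> 0" unfolding T_def by simp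
  have R0: "R \<ge> 0" unfolding R_def using T0 by simp
  have R2: "R^2 = 2*T/3" unfolding R_def using T0 by simp
  define p q where "p = m - R" and "q = m + R/2"
  have a: "a = m + y1" and b: "b = m + y2" and c: "c = m + y3" unfolding y1_def y2_def y3_def by auto
  have e1: "p + 2*q = a+b+c" unfolding p_def q_def by (simp add: m_def field_simps)
  have e2: "p^2 + 2*q^2 = a^2+b^2+c^2"
  proof -
    have "p^2 + 2*q^2 = 3*m^2 + 3/2*R^2" unfolding p_def q_def by (simp add: power2_eq_square algebra_simps)
    also have "\<dots> = 3*m^2 + T" using R2 by simp
    also have "\<dots> = a^2+b^2+c^2" unfolding a b c T_def y3e by algebra
    finally show ?thesis .
  qed
  have prod: "a*b*c - p*q*q = R^3/4 + y1*y2*y3"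
  proof -
    have "a*b*c = m^3 + m*(y1*y2+y1*y3+y2*y3) + y1*y2*y3" unfolding a b c y3e by algebra
    moreover have "y1*y2+y1*y3+y2*y3 = -T/2" unfolding T_def y3e by algebra
    moreover have "p*q*q = m^3 - 3/4*m*R^2 - R^3/4" unfolding p_def q_def
      by (simp add: field_simps power3_eq_cube power2_eq_square)
    ultimately have A: "a*b*c = m^3 - m*(T/2) + y1*y2*y3" and B: "p*q*q = m^3 - m*(3/4*R^2) - R^3/4"
      by simp_all
    have "3/4*R^2 = T/2" using R2 by simp
    then show ?thesis using A B by simp
  qed
  show ?thesis using e1 e2 prod core by (intro exI[of _ p] exI[of _ q]) auto
qed


lemma sum_upd3:
  fixes g :: "'a \<Rightarrow> real"
  assumes "finite I" "i \<in> I" "j \<in> I" "k \<in> I" "i \<noteq> j" "i \<noteq> k" "j \<noteq> k"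
  shows "(\<Sum>l\<in>I. g ((x(i:=p, j:=q, k:=r)) l)) = (\<Sum>l\<in>I-{i,j,k}. g (x l)) + g p + g q + g r"
proof -
  have I: "I = insert i (insert j (insert k (I-{i,j,k})))" using assms by auto
  have "(\<Sum>l\<in>I. g ((x(i:=p, j:=q, k:=r)) l)) =
        (\<Sum>l\<in>insert i (insert j (insert k (I-{i,j,k}))). g ((x(i:=p, j:=q, k:=r)) l))"
    using I by simp
  also have "\<dots> = g p + (g q + (g r + (\<Sum>l\<in>I-{i,j,k}. g ((x(i:=p, j:=q, k:=r)) l))))"
    using assms by (simp add: sum.insert)
  also have "(\<Sum>l\<in>I-{i,j,k}. g ((x(i:=p, j:=q, k:=r)) l)) = (\<Sum>l\<in>I-{i,j,k}. g (x l))"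
    by (intro sum.cong) auto
  finally show ?thesis by linarith
qed

lemma prod_upd3:
  fixes g :: "'a \<Rightarrow> real"
  assumes "finite I" "i \<in> I" "j \<in> I" "k \<in> I" "i \<noteq> j" "i \<noteq> k" "j \<noteq> k"
  shows "(\<Prod>l\<in>I. (x(i:=p, j:=q, k:=r)) l) = (\<Prod>l\<in>I-{i,j,k}. x l) * (p * q * r)"
proof -
  have I: "I = insert i (insert j (insert k (I-{i,j,k})))" using assms by auto
  have "(\<Prod>l\<in>I. (x(i:=p, j:=q, k:=r)) l) =
        (\<Prod>l\<in>insert i (insert j (insert k (I-{i,j,k}))). (x(i:=p, j:=q, k:=r)) l)"
    using I by simp
  also have "\<dots> = p * (q * (r * (\<Prod>l\<in>I-{i,j,k}. (x(i:=p, j:=q, k:=r)) l)))"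
    using assms by (simp add: prod.insert)
  also have "(\<Prod>l\<in>I-{i,j,k}. (x(i:=p, j:=q, k:=r)) l) = (\<Prod>l\<in>I-{i,j,k}. x l)"
    by (intro prod.cong) auto
  finally show ?thesis by (simp only: mult_ac)
qed

lemma samuelson:
  fixes x :: "nat \<Rightarrow> real"
  assumes S: "(\<Sum>i<n. x i) = real n * \<mu>" and k: "k < n"
  shows "real n * (x k - \<mu>)^2 \<le> (real n - 1) * (\<Sum>i<n. (x i - \<mu>)^2)"
proof -
  define J where "J = {..<n} - {k}"
  have cJ: "card J = n - 1" unfolding J_def using k by simp
  have fJ: "finite J" unfolding J_def by simp
  have s0: "(\<Sum>i<n. x i - \<mu>) = 0" using S by (simp add: sum_subtractf)
  have "(\<Sum>i<n. x i - \<mu>) = (x k - \<mu>) + (\<Sum>i\<in>J. x i - \<mu>)"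
    unfolding J_def using k by (simp add: sum.remove)
  then have sJ: "(\<Sum>i\<in>J. x i - \<mu>) = -(x k - \<mu>)" using s0 by simp
  have q: "(\<Sum>i<n. (x i - \<mu>)^2) = (x k - \<mu>)^2 + (\<Sum>i\<in>J. (x i - \<mu>)^2)"
    unfolding J_def using k by (simp add: sum.remove)
  have "(\<Sum>i\<in>J. x i - \<mu>)^2 \<le> (\<Sum>i\<in>J. (x i - \<mu>)^2) * card J"
    by (rule sum_squared_le_sum_of_squares)
  then have cs: "(x k - \<mu>)^2 \<le> (\<Sum>i\<in>J. (x i - \<mu>)^2) * (real n - 1)"
    using sJ cJ k by (simp add: of_nat_diff power2_commute)
  have n1: "real n \<ge> 1" using k by simp
  show ?thesis unfolding q using cs n1 by (simp add: algebra_simps)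
qed

lemma samuelson2:
  fixes x :: "nat \<Rightarrow> real"
  assumes n2: "n \<ge> 2" and S: "(\<Sum>i<n. x i) = real n * \<mu>"
    and V: "(\<Sum>i<n. (x i - \<mu>)^2) = real n * (real n - 1) * s^2"
    and s0: "s \<ge> 0" and k: "k < n"
  shows "\<bar>x k - \<mu>\<bar> \<le> (real n - 1) * s"
proof -
  have "real n * (x k - \<mu>)^2 \<le> real n * ((real n - 1) * s)^2"
    using samuelson[OF S k] unfolding V by (simp add: power2_eq_square algebra_simps)
  then have "(x k - \<mu>)^2 \<le> ((real n - 1) * s)^2" using n2 by simp
  then have "\<bar>x k - \<mu>\<bar>^2 \<le> ((real n - 1) * s)^2" by simp
  moreover have "(real n - 1) * s \<ge> 0" using n2 s0 by simp
  ultimately show ?thesis using power2_le_imp_le by blast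
qed

lemma sum_if0:
  fixes g :: "real \<Rightarrow> real"
  assumes "n > 0"
  shows "(\<Sum>i<n. g (if i = 0 then a else b)) = g a + (real n - 1) * g b"
proof -
  obtain m where n: "n = Suc m" using assms by (cases n) auto
  show ?thesis unfolding n by (simp add: sum.lessThan_Suc_shift del: sum.lessThan_Suc)
qed

lemma prod_if0:
  assumes "n > 0"
  shows "(\<Prod>i<n. (if i = 0 then a else b)) = a * (b::real)^(n-1)"
proof -
  obtain m where n: "n = Suc m" using assms by (cases n) auto
  show ?thesis unfolding n by (simp add: prod.lessThan_Suc_shift del: prod.lessThan_Suc)
qed

lemma compact_K:
  fixes A V :: real and n :: nat
  shows "compact ((\<lambda>x. \<Prod>i<n. x i) ` {x \<in> PiE {..<n} (\<lambda>_. {0..A}). (\<Sum>i<n. x i) = A \<and> (\<Sum>i<n. (x i - A/n)^2) = V})"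
proof -
  let ?X = "product_topology (\<lambda>_. euclideanreal) {..<n}"
  let ?P = "PiE {..<n} (\<lambda>_. {0..A::real})"
  have c1: "compactin ?X ?P"
    by (simp add: compactin_PiE)
  have cs: "continuous_map ?X euclideanreal (\<lambda>x. \<Sum>i<n. x i)"
    by (intro continuous_map_sum) (auto intro: continuous_map_product_projection)
  have cv: "continuous_map ?X euclideanreal (\<lambda>x. \<Sum>i<n. (x i - A/n)^2)"
    by (intro continuous_map_sum continuous_map_real_pow continuous_map_diff) (auto intro: continuous_map_product_projection)
  have cp: "continuous_map ?X euclideanreal (\<lambda>x. \<Prod>i<n. x i)"
    by (intro continuous_map_prod) (auto intro: continuous_map_product_projection)
  have cl1: "closedin ?X {x \<in> topspace ?X. (\<Sum>i<n. x i) \<in> {A}}"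
    by (rule closedin_continuous_map_preimage[OF cs]) auto
  have cl2: "closedin ?X {x \<in> topspace ?X. (\<Sum>i<n. (x i - A/n)^2) \<in> {V}}"
    by (rule closedin_continuous_map_preimage[OF cv]) auto
  have eq: "{x \<in> ?P. (\<Sum>i<n. x i) = A \<and> (\<Sum>i<n. (x i - A/n)^2) = V} =
     ({x \<in> topspace ?X. (\<Sum>i<n. x i) \<in> {A}} \<inter> {x \<in> topspace ?X. (\<Sum>i<n. (x i - A/n)^2) \<in> {V}}) \<inter> ?P"
    by auto
  have "compactin ?X {x \<in> ?P. (\<Sum>i<n. x i) = A \<and> (\<Sum>i<n. (x i - A/n)^2) = V}"
    unfolding eq
    by (intro closed_Int_compactin c1 closedin_Int cl1 cl2)
  from image_compactin[OF this cp] show ?thesis by simp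
qed

lemma sum_allbut:
  fixes g :: "real \<Rightarrow> real"
  assumes k: "k < n" and eq: "\<forall>i<n. i \<noteq> k \<longrightarrow> x i = a"
  shows "(\<Sum>i<n. g (x i)) = g (x k) + (real n - 1) * g a"
proof -
  have "(\<Sum>i<n. g (x i)) = g (x k) + (\<Sum>i\<in>{..<n}-{k}. g (x i))"
    using k by (simp add: sum.remove)
  also have "(\<Sum>i\<in>{..<n}-{k}. g (x i)) = (\<Sum>i\<in>{..<n}-{k}. g a)"
    using eq by (intro sum.cong) auto
  also have "\<dots> = (real n - 1) * g a" using k by (simp add: of_nat_diff)
  finally show ?thesis .
qed

lemma prod_allbut:
  fixes x :: "nat \<Rightarrow> real"
  assumes k: "k < n" and eq: "\<forall>i<n. i \<noteq> k \<longrightarrow> x i = a"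
  shows "(\<Prod>i<n. x i) = x k * a^(n-1)"
proof -
  have "(\<Prod>i<n. x i) = x k * (\<Prod>i\<in>{..<n}-{k}. x i)"
    using k by (simp add: prod.remove)
  also have "(\<Prod>i\<in>{..<n}-{k}. x i) = (\<Prod>i\<in>{..<n}-{k}. a)"
    using eq by (intro prod.cong) auto
  also have "\<dots> = a^(n-1)" using k by simp
  finally show ?thesis .
qed

lemma restrict_sum: "(\<Sum>i<n. g (restrict f {..<n} i)) = (\<Sum>i<n. g (f i))"
  by (intro sum.cong) auto

lemma restrict_prod: "(\<Prod>i<n. restrict f {..<n} i) = (\<Prod>i<n. f i)"
  by (intro prod.cong) auto

lemma le_sum_nonneg:
  fixes x :: "nat \<Rightarrow> real"
  assumes "\<forall>i<n. x i \<ge> 0" "k < n"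
  shows "x k \<le> (\<Sum>i<n. x i)"
  using assms by (intro member_le_sum) auto

lemma upper_core:
  fixes x :: "nat \<Rightarrow> real" and \<mu> s :: real
  assumes n2: "n \<ge> 2" and pos: "\<forall>i<n. x i > 0" and S: "(\<Sum>i<n. x i) = real n * \<mu>"
    and V: "(\<Sum>i<n. (x i - \<mu>)^2) = real n * (real n - 1) * s^2"
    and s0: "0 \<le> s" and sm: "s < \<mu>"
  shows "(\<Prod>i<n. x i) \<le> (\<mu> + (real n - 1) * s) * (\<mu> - s)^(n-1)"
proof -
  define A where "A = real n * \<mu>"
  define W where "W = real n * (real n - 1) * s^2"
  define K where "K = {x \<in> PiE {..<n} (\<lambda>_. {0..A}). (\<Sum>i<n. x i) = A \<and> (\<Sum>i<n. (x i - A/n)^2) = W}"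
  have n0: "n > 0" using n2 by simp
  have An: "A / real n = \<mu>" unfolding A_def using n0 by simp
  have Kmem': "restrict y {..<n} \<in> K" if "\<forall>i<n. y i \<ge> 0" "(\<Sum>i<n. y i) = A" "(\<Sum>i<n. (y i - \<mu>)^2) = W" for y
  proof -
    have "\<forall>i<n. y i \<le> A" using le_sum_nonneg[of n y] that by auto
    then show ?thesis unfolding K_def An using that by (auto simp: restrict_sum)
  qed
  have Kprop: "(\<forall>i<n. y i \<ge> 0) \<and> (\<Sum>i<n. y i) = A \<and> (\<Sum>i<n. (y i - \<mu>)^2) = W" if "y \<in> K" for y
    using that unfolding K_def An by (auto simp: PiE_def Pi_def)
  define z where "z = (\<lambda>i::nat. if i = 0 then \<mu> + (real n - 1) * s else \<mu> - s)"
  have zpos: "\<forall>i<n. z i \<ge> 0" unfolding z_def using sm s0 n2 by auto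
  have zS: "(\<Sum>i<n. z i) = A" unfolding z_def A_def
    using sum_if0[OF n0, of "\<lambda>t. t" "\<mu> + (real n - 1) * s" "\<mu> - s"] by (simp add: algebra_simps)
  have zV: "(\<Sum>i<n. (z i - \<mu>)^2) = W" unfolding z_def W_def
    using sum_if0[OF n0, of "\<lambda>t. (t - \<mu>)^2" "\<mu> + (real n - 1) * s" "\<mu> - s"] by (simp add: algebra_simps power2_eq_square)
  have zP: "(\<Prod>i<n. z i) = (\<mu> + (real n - 1) * s) * (\<mu> - s)^(n-1)"
    unfolding z_def by (rule prod_if0[OF n0])
  have Upos: "(\<mu> + (real n - 1) * s) * (\<mu> - s)^(n-1) > 0"
  proof -
    have "real n - 1 \<ge> 0" using n2 by simp
    then have "\<mu> + (real n - 1) * s > 0" using sm s0 by (smt (verit) mult_nonneg_nonneg)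
    moreover have "(\<mu> - s)^(n-1) > 0" using sm by simp
    ultimately show ?thesis by simp
  qed
  have zK: "restrict z {..<n} \<in> K" by (rule Kmem'[OF zpos zS zV])
  have "compact ((\<lambda>x. \<Prod>i<n. x i) ` K)" unfolding K_def by (rule compact_K)
  moreover have "(\<lambda>x. \<Prod>i<n. x i) ` K \<noteq> {}" using zK by auto
  ultimately obtain xm where xmK: "xm \<in> K" and xmmax: "\<forall>y\<in>K. (\<Prod>i<n. y i) \<le> (\<Prod>i<n. xm i)"
    by (metis (no_types, lifting) compact_attains_sup imageE image_eqI)
  have xmP: "(\<Prod>i<n. xm i) \<ge> (\<mu> + (real n - 1) * s) * (\<mu> - s)^(n-1)"
    using xmmax zK zP by (metis restrict_prod)
  have xm0: "\<forall>i<n. xm i \<ge> 0" and xmS: "(\<Sum>i<n. xm i) = A" and xmV: "(\<Sum>i<n. (xm i - \<mu>)^2) = W"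
    using Kprop[OF xmK] by auto
  have xmpos: "\<forall>i<n. xm i > 0"
  proof (intro allI impI)
    fix i assume i: "i < n"
    show "xm i > 0"
    proof (rule ccontr)
      assume "\<not> xm i > 0"
      then have "xm i = 0" using xm0 i by force
      then have "(\<Prod>i<n. xm i) = 0" using i by (metis finite_lessThan lessThan_iff prod_zero_iff)
      then show False using xmP Upos by linarith
    qed
  qed
  have claim: "xm i = xm j" if ij: "i < n" "j < n" "k < n" "i \<noteq> j" "i \<noteq> k" "j \<noteq> k"
       "xm i \<le> xm j" "xm j \<le> xm k" for i j k
  proof (rule ccontr)
    assume "xm i \<noteq> xm j"
    then have lt: "xm i < xm j" using ij by simp
    obtain p q where e1: "2*p + q = xm i + xm j + xm k" and e2: "2*p^2 + q^2 = (xm i)^2 + (xm j)^2 + (xm k)^2"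
      and pge: "xm i \<le> p" and pq: "p \<le> q" and pr: "xm i * xm j * xm k < p*p*q"
      using triple_up[OF ij(7) ij(8) lt] by blast
    define x' where "x' = xm(i:=p, j:=p, k:=q)"
    have I: "finite {..<n}" "i \<in> {..<n}" "j \<in> {..<n}" "k \<in> {..<n}" using ij by auto
    have xmrep: "xm = xm(i:=xm i, j:=xm j, k:=xm k)" by simp
    have sumx: "(\<Sum>l<n. g (xm l)) = (\<Sum>l\<in>{..<n}-{i,j,k}. g (xm l)) + g (xm i) + g (xm j) + g (xm k)" for g :: "real \<Rightarrow> real"
      using sum_upd3[OF I ij(4-6), of g xm "xm i" "xm j" "xm k"] by simp
    have sumx': "(\<Sum>l<n. g (x' l)) = (\<Sum>l\<in>{..<n}-{i,j,k}. g (xm l)) + g p + g p + g q" for g :: "real \<Rightarrow> real"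
      unfolding x'_def by (rule sum_upd3[OF I ij(4-6)])
    have x'S: "(\<Sum>l<n. x' l) = A"
      using sumx[of "\<lambda>t. t"] sumx'[of "\<lambda>t. t"] xmS e1 by simp
    have x'V: "(\<Sum>l<n. (x' l - \<mu>)^2) = W"
    proof -
      have "(p - \<mu>)^2 + (p - \<mu>)^2 + (q - \<mu>)^2 = (xm i - \<mu>)^2 + (xm j - \<mu>)^2 + (xm k - \<mu>)^2"
      proof -
        have "(p - \<mu>)^2 + (p - \<mu>)^2 + (q - \<mu>)^2 = (2*p^2 + q^2) - 2*\<mu>*(2*p+q) + 3*\<mu>^2"
          by (simp add: power2_eq_square algebra_simps)
        also have "\<dots> = ((xm i)^2 + (xm j)^2 + (xm k)^2) - 2*\<mu>*(xm i + xm j + xm k) + 3*\<mu>^2"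
          using e1 e2 by simp
        also have "\<dots> = (xm i - \<mu>)^2 + (xm j - \<mu>)^2 + (xm k - \<mu>)^2"
          by (simp add: power2_eq_square algebra_simps)
        finally show ?thesis .
      qed
      then show ?thesis using sumx[of "\<lambda>t. (t - \<mu>)^2"] sumx'[of "\<lambda>t. (t - \<mu>)^2"] xmV by simp
    qed
    have x'0: "\<forall>l<n. x' l \<ge> 0" unfolding x'_def using xm0 pge pq ij by auto
    have x'K: "restrict x' {..<n} \<in> K" by (rule Kmem'[OF x'0 x'S x'V])
    have rpos: "(\<Prod>l\<in>{..<n}-{i,j,k}. xm l) > 0" using xmpos by (intro prod_pos) auto
    have "(\<Prod>l<n. xm l) = (\<Prod>l\<in>{..<n}-{i,j,k}. xm l) * (xm i * xm j * xm k)"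
      using prod_upd3[OF I ij(4-6), of xm "xm i" "xm j" "xm k"] by simp
    also have "\<dots> < (\<Prod>l\<in>{..<n}-{i,j,k}. xm l) * (p * p * q)"
      using rpos pr by simp
    also have "\<dots> = (\<Prod>l<n. x' l)"
      unfolding x'_def by (rule prod_upd3[OF I ij(4-6), symmetric])
    finally have "(\<Prod>l<n. xm l) < (\<Prod>l<n. restrict x' {..<n} l)" by (simp add: restrict_prod)
    then show False using xmmax x'K by fastforce
  qed
  obtain k where k: "k < n" and kmax: "\<forall>i<n. xm i \<le> xm k"
  proof -
    have "Max (xm ` {..<n}) \<in> xm ` {..<n}" using n0 by (intro Max_in) auto
    then obtain k where "k < n" "xm k = Max (xm ` {..<n})" by auto
    then show ?thesis using that by auto
  qed
  define i0 where "i0 = (if k = 0 then 1 else (0::nat))"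
  have i0: "i0 < n" "i0 \<noteq> k" unfolding i0_def using n2 by auto
  define a where "a = xm i0"
  have alleq: "\<forall>i<n. i \<noteq> k \<longrightarrow> xm i = a"
  proof (intro allI impI)
    fix i assume i: "i < n" "i \<noteq> k"
    show "xm i = a"
    proof (cases "i = i0")
      case True then show ?thesis unfolding a_def by simp
    next
      case False
      show ?thesis
      proof (cases "xm i \<le> xm i0")
        case True
        show ?thesis unfolding a_def by (rule claim[of i i0 k]) (use i i0 False True kmax k in auto)
      next
        case F2: False
        show ?thesis unfolding a_def by (rule claim[of i0 i k, symmetric]) (use i i0 False F2 kmax k in auto)
      qed
    qed
  qed
  define b where "b = xm k"
  have ab: "a \<le> b" unfolding a_def b_def using kmax i0 by auto
  have sS: "b + (real n - 1) * a = real n * \<mu>"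
    using sum_allbut[OF k alleq, of "\<lambda>t. t"] xmS unfolding A_def b_def by simp
  have sV: "(b - \<mu>)^2 + (real n - 1) * (a - \<mu>)^2 = real n * (real n - 1) * s^2"
    using sum_allbut[OF k alleq, of "\<lambda>t. (t - \<mu>)^2"] xmV unfolding W_def b_def by simp
  have pr: "(\<Prod>i<n. xm i) = b * a^(n-1)" using prod_allbut[OF k alleq] unfolding b_def .
  define d where "d = \<mu> - a"
  have bd: "b - \<mu> = (real n - 1) * d" using sS unfolding d_def by (simp add: algebra_simps)
  have n1: "real n - 1 > 0" using n2 by simp
  have "real n * (real n - 1) * d^2 = real n * (real n - 1) * s^2"
  proof -
    have "(b - \<mu>)^2 + (real n - 1) * (a - \<mu>)^2 = ((real n - 1) * d)^2 + (real n - 1) * d^2"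
      using bd unfolding d_def by (simp add: power2_commute)
    also have "\<dots> = real n * (real n - 1) * d^2" by (simp add: power2_eq_square algebra_simps)
    finally show ?thesis using sV by linarith
  qed
  then have "d^2 = s^2" using n1 n0 by simp
  moreover have "d \<ge> 0"
  proof -
    have "b - a = real n * d" using bd unfolding d_def by (simp add: algebra_simps)
    then have "real n * d \<ge> 0" using ab by simp
    then show ?thesis using n0 by (simp add: zero_le_mult_iff)
  qed
  ultimately have ds: "d = s" using s0 by (metis power2_eq_iff_nonneg)
  have "(\<Prod>i<n. xm i) = (\<mu> + (real n - 1) * s) * (\<mu> - s)^(n-1)"
    using pr bd ds unfolding d_def by (simp add: algebra_simps)
  moreover have "restrict x {..<n} \<in> K"
    using pos S V by (intro Kmem') (auto simp: A_def W_def less_imp_le)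
  ultimately show ?thesis using xmmax restrict_prod by metis
qed


lemma lower_core:
  fixes x :: "nat \<Rightarrow> real" and \<mu> s :: real
  assumes n2: "n \<ge> 2" and S: "(\<Sum>i<n. x i) = real n * \<mu>"
    and V: "(\<Sum>i<n. (x i - \<mu>)^2) = real n * (real n - 1) * s^2"
    and s0: "0 \<le> s" and sm: "(real n - 1) * s < \<mu>"
  shows "(\<mu> - (real n - 1) * s) * (\<mu> + s)^(n-1) \<le> (\<Prod>i<n. x i)"
proof -
  define A where "A = real n * \<mu>"
  define W where "W = real n * (real n - 1) * s^2"
  define K where "K = {x \<in> PiE {..<n} (\<lambda>_. {0..A}). (\<Sum>i<n. x i) = A \<and> (\<Sum>i<n. (x i - A/n)^2) = W}"
  have n0: "n > 0" using n2 by simp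
  have An: "A / real n = \<mu>" unfolding A_def using n0 by simp
  have sam: "y i > 0" if "(\<Sum>i<n. y i) = A" "(\<Sum>i<n. (y i - \<mu>)^2) = W" "i < n" for y i
  proof -
    have "\<bar>y i - \<mu>\<bar> \<le> (real n - 1) * s"
      by (rule samuelson2[OF n2 _ _ s0 that(3)]) (use that in \<open>auto simp: A_def W_def\<close>)
    then show ?thesis using sm by linarith
  qed
  have Kmem': "restrict y {..<n} \<in> K" if "(\<Sum>i<n. y i) = A" "(\<Sum>i<n. (y i - \<mu>)^2) = W" for y
  proof -
    have y0: "\<forall>i<n. y i \<ge> 0" using sam[OF that] by (simp add: less_imp_le)
    have "\<forall>i<n. y i \<le> A" using le_sum_nonneg[of n y] that y0 by auto
    then show ?thesis unfolding K_def An using that y0 by (auto simp: restrict_sum)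
  qed
  have Kprop: "(\<forall>i<n. y i \<ge> 0) \<and> (\<Sum>i<n. y i) = A \<and> (\<Sum>i<n. (y i - \<mu>)^2) = W" if "y \<in> K" for y
    using that unfolding K_def An by (auto simp: PiE_def Pi_def)
  define z where "z = (\<lambda>i::nat. if i = 0 then \<mu> - (real n - 1) * s else \<mu> + s)"
  have zS: "(\<Sum>i<n. z i) = A" unfolding z_def A_def
    using sum_if0[OF n0, of "\<lambda>t. t" "\<mu> - (real n - 1) * s" "\<mu> + s"] by (simp add: algebra_simps)
  have zV: "(\<Sum>i<n. (z i - \<mu>)^2) = W" unfolding z_def W_def
    using sum_if0[OF n0, of "\<lambda>t. (t - \<mu>)^2" "\<mu> - (real n - 1) * s" "\<mu> + s"] by (simp add: algebra_simps power2_eq_square)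
  have zK: "restrict z {..<n} \<in> K" by (rule Kmem'[OF zS zV])
  have "compact ((\<lambda>x. \<Prod>i<n. x i) ` K)" unfolding K_def by (rule compact_K)
  moreover have "(\<lambda>x. \<Prod>i<n. x i) ` K \<noteq> {}" using zK by auto
  ultimately obtain xm where xmK: "xm \<in> K" and xmmin: "\<forall>y\<in>K. (\<Prod>i<n. xm i) \<le> (\<Prod>i<n. y i)"
    by (metis (no_types, lifting) compact_attains_inf imageE image_eqI)
  have xm0: "\<forall>i<n. xm i \<ge> 0" and xmS: "(\<Sum>i<n. xm i) = A" and xmV: "(\<Sum>i<n. (xm i - \<mu>)^2) = W"
    using Kprop[OF xmK] by auto
  have xmpos: "\<forall>i<n. xm i > 0" using sam[OF xmS xmV] by auto
  have claim: "xm j = xm k" if ij: "i < n" "j < n" "k < n" "i \<noteq> j" "i \<noteq> k" "j \<noteq> k"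
       "xm i \<le> xm j" "xm j \<le> xm k" for i j k
  proof (rule ccontr)
    assume "xm j \<noteq> xm k"
    then have lt: "xm j < xm k" using ij by simp
    obtain p q where e1: "p + 2*q = xm i + xm j + xm k" and e2: "p^2 + 2*q^2 = (xm i)^2 + (xm j)^2 + (xm k)^2"
      and pr: "p*q*q < xm i * xm j * xm k"
      using triple_low[OF ij(7) ij(8) lt] by blast
    define x' where "x' = xm(i:=p, j:=q, k:=q)"
    have I: "finite {..<n}" "i \<in> {..<n}" "j \<in> {..<n}" "k \<in> {..<n}" using ij by auto
    have sumx: "(\<Sum>l<n. g (xm l)) = (\<Sum>l\<in>{..<n}-{i,j,k}. g (xm l)) + g (xm i) + g (xm j) + g (xm k)" for g :: "real \<Rightarrow> real"
      using sum_upd3[OF I ij(4-6), of g xm "xm i" "xm j" "xm k"] by simp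
    have sumx': "(\<Sum>l<n. g (x' l)) = (\<Sum>l\<in>{..<n}-{i,j,k}. g (xm l)) + g p + g q + g q" for g :: "real \<Rightarrow> real"
      unfolding x'_def by (rule sum_upd3[OF I ij(4-6)])
    have x'S: "(\<Sum>l<n. x' l) = A"
      using sumx[of "\<lambda>t. t"] sumx'[of "\<lambda>t. t"] xmS e1 by simp
    have x'V: "(\<Sum>l<n. (x' l - \<mu>)^2) = W"
    proof -
      have "(p - \<mu>)^2 + (q - \<mu>)^2 + (q - \<mu>)^2 = (xm i - \<mu>)^2 + (xm j - \<mu>)^2 + (xm k - \<mu>)^2"
      proof -
        have "(p - \<mu>)^2 + (q - \<mu>)^2 + (q - \<mu>)^2 = (p^2 + 2*q^2) - 2*\<mu>*(p+2*q) + 3*\<mu>^2"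
          by (simp add: power2_eq_square algebra_simps)
        also have "\<dots> = ((xm i)^2 + (xm j)^2 + (xm k)^2) - 2*\<mu>*(xm i + xm j + xm k) + 3*\<mu>^2"
          using e1 e2 by simp
        also have "\<dots> = (xm i - \<mu>)^2 + (xm j - \<mu>)^2 + (xm k - \<mu>)^2"
          by (simp add: power2_eq_square algebra_simps)
        finally show ?thesis .
      qed
      then show ?thesis using sumx[of "\<lambda>t. (t - \<mu>)^2"] sumx'[of "\<lambda>t. (t - \<mu>)^2"] xmV by simp
    qed
    have x'K: "restrict x' {..<n} \<in> K" by (rule Kmem'[OF x'S x'V])
    have rpos: "(\<Prod>l\<in>{..<n}-{i,j,k}. xm l) > 0" using xmpos by (intro prod_pos) auto
    have "(\<Prod>l<n. x' l) = (\<Prod>l\<in>{..<n}-{i,j,k}. xm l) * (p * q * q)"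
      unfolding x'_def by (rule prod_upd3[OF I ij(4-6)])
    also have "\<dots> < (\<Prod>l\<in>{..<n}-{i,j,k}. xm l) * (xm i * xm j * xm k)"
      using rpos pr by simp
    also have "\<dots> = (\<Prod>l<n. xm l)"
      using prod_upd3[OF I ij(4-6), of xm "xm i" "xm j" "xm k"] by simp
    finally have "(\<Prod>l<n. restrict x' {..<n} l) < (\<Prod>l<n. xm l)" by (simp add: restrict_prod)
    then show False using xmmin x'K by fastforce
  qed
  obtain k where k: "k < n" and kmin: "\<forall>i<n. xm k \<le> xm i"
  proof -
    have "Min (xm ` {..<n}) \<in> xm ` {..<n}" using n0 by (intro Min_in) auto
    then obtain k where "k < n" "xm k = Min (xm ` {..<n})" by auto
    then show ?thesis using that by auto
  qed
  define i0 where "i0 = (if k = 0 then 1 else (0::nat))"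
  have i0: "i0 < n" "i0 \<noteq> k" unfolding i0_def using n2 by auto
  define a where "a = xm i0"
  have alleq: "\<forall>i<n. i \<noteq> k \<longrightarrow> xm i = a"
  proof (intro allI impI)
    fix i assume i: "i < n" "i \<noteq> k"
    show "xm i = a"
    proof (cases "i = i0")
      case True then show ?thesis unfolding a_def by simp
    next
      case False
      show ?thesis
      proof (cases "xm i \<le> xm i0")
        case True
        show ?thesis unfolding a_def by (rule claim[of k i i0]) (use i i0 False True kmin k in auto)
      next
        case F2: False
        show ?thesis unfolding a_def by (rule claim[of k i0 i, symmetric]) (use i i0 False F2 kmin k in auto)
      qed
    qed
  qed
  define b where "b = xm k"
  have ab: "b \<le> a" unfolding a_def b_def using kmin i0 by auto
  have sS: "b + (real n - 1) * a = real n * \<mu>"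
    using sum_allbut[OF k alleq, of "\<lambda>t. t"] xmS unfolding A_def b_def by simp
  have sV: "(b - \<mu>)^2 + (real n - 1) * (a - \<mu>)^2 = real n * (real n - 1) * s^2"
    using sum_allbut[OF k alleq, of "\<lambda>t. (t - \<mu>)^2"] xmV unfolding W_def b_def by simp
  have pr: "(\<Prod>i<n. xm i) = b * a^(n-1)" using prod_allbut[OF k alleq] unfolding b_def .
  define d where "d = a - \<mu>"
  have bd: "\<mu> - b = (real n - 1) * d" using sS unfolding d_def by (simp add: algebra_simps)
  have n1: "real n - 1 > 0" using n2 by simp
  have "real n * (real n - 1) * d^2 = real n * (real n - 1) * s^2"
  proof -
    have "(b - \<mu>)^2 + (real n - 1) * (a - \<mu>)^2 = ((real n - 1) * d)^2 + (real n - 1) * d^2"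
      using bd unfolding d_def by (simp add: power2_commute)
    also have "\<dots> = real n * (real n - 1) * d^2" by (simp add: power2_eq_square algebra_simps)
    finally show ?thesis using sV by linarith
  qed
  then have "d^2 = s^2" using n1 n0 by simp
  moreover have "d \<ge> 0"
  proof -
    have "a - b = real n * d" using bd unfolding d_def by (simp add: algebra_simps)
    then have "real n * d \<ge> 0" using ab by simp
    then show ?thesis using n0 by (simp add: zero_le_mult_iff)
  qed
  ultimately have ds: "d = s" using s0 by (metis power2_eq_iff_nonneg)
  have "(\<Prod>i<n. xm i) = (\<mu> - (real n - 1) * s) * (\<mu> + s)^(n-1)"
    using pr bd ds unfolding d_def by (simp add: algebra_simps)
  moreover have "restrict x {..<n} \<in> K"
    using S V by (intro Kmem') (auto simp: A_def W_def)
  ultimately show ?thesis using xmmin restrict_prod by metis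
qed


lemma sqrt_id:
  assumes "n \<ge> 2"
  shows "(real n - 1) * (\<sigma> / sqrt (real n - 1)) = \<sigma> * sqrt (real n - 1)"
    and "sqrt (real n - 1) > 0" and "(sqrt (real n - 1))^2 = real n - 1"
proof -
  have p: "real n - 1 > 0" using assms by simp
  show r: "sqrt (real n - 1) > 0" using p by simp
  show r2: "(sqrt (real n - 1))^2 = real n - 1" using p by simp
  show "(real n - 1) * (\<sigma> / sqrt (real n - 1)) = \<sigma> * sqrt (real n - 1)"
    using r r2 by (simp add: field_simps power2_eq_square)
qed

lemma bd_eq:
  assumes "n \<ge> 2"
  shows "lower_bd n \<mu> \<sigma> = (\<mu> - (real n - 1) * (\<sigma> / sqrt (real n - 1))) * (\<mu> + \<sigma> / sqrt (real n - 1))^(n-1)"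
    and "upper_bd n \<mu> \<sigma> = (\<mu> + (real n - 1) * (\<sigma> / sqrt (real n - 1))) * (\<mu> - \<sigma> / sqrt (real n - 1))^(n-1)"
  unfolding lower_bd_def upper_bd_def sqrt_id(1)[OF assms] by simp_all

lemma mv:
  fixes x :: "nat \<Rightarrow> real"
  assumes "n > 0" "(\<Sum>i<n. x i) = real n * \<mu>" "(\<Sum>i<n. (x i - \<mu>)^2) = V"
  shows "mean n x = \<mu>" "variance n x = V / real n"
proof -
  show m: "mean n x = \<mu>" unfolding mean_def using assms by simp
  show "variance n x = V / real n" unfolding variance_def m using assms by simp
qed

lemma stats:
  fixes x :: "nat \<Rightarrow> real"
  assumes n2: "n \<ge> 2"
  shows "(\<Sum>i<n. x i) = real n * mean n x"
    and "(\<Sum>i<n. (x i - mean n x)^2) = real n * (real n - 1) * (sdev n x / sqrt (real n - 1))^2"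
    and "sdev n x \<ge> 0"
proof -
  have n0: "real n > 0" using n2 by simp
  show "(\<Sum>i<n. x i) = real n * mean n x" unfolding mean_def using n0 by simp
  have v0: "variance n x \<ge> 0" unfolding variance_def by (simp add: sum_nonneg)
  show "sdev n x \<ge> 0" unfolding sdev_def using v0 by simp
  have "(sdev n x / sqrt (real n - 1))^2 = variance n x / (real n - 1)"
    unfolding sdev_def using v0 sqrt_id(3)[OF n2] by (simp add: power_divide)
  then show "(\<Sum>i<n. (x i - mean n x)^2) = real n * (real n - 1) * (sdev n x / sqrt (real n - 1))^2"
    using n0 n2 unfolding variance_def by (simp add: field_simps)
qed

lemma ext_cfg:
  fixes \<sigma> \<mu> :: real and n :: nat
  assumes n2: "n \<ge> 2"
  defines "s \<equiv> \<sigma> / sqrt (real n - 1)"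
  shows "mean n (\<lambda>i. if i = 0 then \<mu> - (real n - 1) * s else \<mu> + s) = \<mu>"
    "variance n (\<lambda>i. if i = 0 then \<mu> - (real n - 1) * s else \<mu> + s) = \<sigma>^2"
    "(\<Prod>i<n. (if i = 0 then \<mu> - (real n - 1) * s else \<mu> + s)) = lower_bd n \<mu> \<sigma>"
    "mean n (\<lambda>i. if i = 0 then \<mu> + (real n - 1) * s else \<mu> - s) = \<mu>"
    "variance n (\<lambda>i. if i = 0 then \<mu> + (real n - 1) * s else \<mu> - s) = \<sigma>^2"
    "(\<Prod>i<n. (if i = 0 then \<mu> + (real n - 1) * s else \<mu> - s)) = upper_bd n \<mu> \<sigma>"
proof -
  have n0: "n > 0" using n2 by simp
  have sig: "\<sigma>^2 = (real n - 1) * s^2" unfolding s_def using sqrt_id[OF n2]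
    by (simp add: power_divide)
  have S1: "(\<Sum>i<n. (if i = 0 then \<mu> - (real n - 1) * s else \<mu> + s)) = real n * \<mu>"
    using sum_if0[OF n0, of "\<lambda>t. t" "\<mu> - (real n - 1) * s" "\<mu> + s"] by (simp add: algebra_simps)
  have V1: "(\<Sum>i<n. ((if i = 0 then \<mu> - (real n - 1) * s else \<mu> + s) - \<mu>)^2) = real n * \<sigma>^2"
    using sum_if0[OF n0, of "\<lambda>t. (t - \<mu>)^2" "\<mu> - (real n - 1) * s" "\<mu> + s"] unfolding sig
    by (simp add: algebra_simps power2_eq_square)
  have S2: "(\<Sum>i<n. (if i = 0 then \<mu> + (real n - 1) * s else \<mu> - s)) = real n * \<mu>"
    using sum_if0[OF n0, of "\<lambda>t. t" "\<mu> + (real n - 1) * s" "\<mu> - s"] by (simp add: algebra_simps)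
  have V2: "(\<Sum>i<n. ((if i = 0 then \<mu> + (real n - 1) * s else \<mu> - s) - \<mu>)^2) = real n * \<sigma>^2"
    using sum_if0[OF n0, of "\<lambda>t. (t - \<mu>)^2" "\<mu> + (real n - 1) * s" "\<mu> - s"] unfolding sig
    by (simp add: algebra_simps power2_eq_square)
  show "mean n (\<lambda>i. if i = 0 then \<mu> - (real n - 1) * s else \<mu> + s) = \<mu>"
    "variance n (\<lambda>i. if i = 0 then \<mu> - (real n - 1) * s else \<mu> + s) = \<sigma>^2"
    using mv[OF n0 S1 V1] n0 by simp_all
  show "mean n (\<lambda>i. if i = 0 then \<mu> + (real n - 1) * s else \<mu> - s) = \<mu>"
    "variance n (\<lambda>i. if i = 0 then \<mu> + (real n - 1) * s else \<mu> - s) = \<sigma>^2"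
    using mv[OF n0 S2 V2] n0 by simp_all
  show "(\<Prod>i<n. (if i = 0 then \<mu> - (real n - 1) * s else \<mu> + s)) = lower_bd n \<mu> \<sigma>"
    unfolding bd_eq[OF n2] s_def[symmetric] by (rule prod_if0[OF n0])
  show "(\<Prod>i<n. (if i = 0 then \<mu> + (real n - 1) * s else \<mu> - s)) = upper_bd n \<mu> \<sigma>"
    unfolding bd_eq[OF n2] s_def[symmetric] by (rule prod_if0[OF n0])
qed


lemma sum_if01:
  fixes g :: "real \<Rightarrow> real"
  assumes "n \<ge> 2"
  shows "(\<Sum>i<n. g (if i = 0 then \<alpha> else if i = 1 then \<beta> else \<gamma>)) = g \<alpha> + g \<beta> + (real n - 2) * g \<gamma>"
proof -
  obtain m where n: "n = Suc (Suc m)" using assms by (metis add_2_eq_Suc le_Suc_ex)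
  show ?thesis unfolding n by (simp add: sum.lessThan_Suc_shift del: sum.lessThan_Suc)
qed

lemma prod_if01:
  assumes "n \<ge> 2"
  shows "(\<Prod>i<n. (if i = 0 then \<alpha> else if i = 1 then \<beta> else \<gamma>)) = \<alpha> * \<beta> * (\<gamma>::real)^(n-2)"
proof -
  obtain m where n: "n = Suc (Suc m)" using assms by (metis add_2_eq_Suc le_Suc_ex)
  show ?thesis unfolding n by (simp add: prod.lessThan_Suc_shift del: prod.lessThan_Suc)
qed

lemma small_cfg:
  fixes \<mu> s \<epsilon> :: real
  assumes n2: "n \<ge> 2" and mu: "\<mu> > 0" and s0: "s \<ge> 0" and sm: "s < \<mu>"
    and big: "\<mu> \<le> (real n - 1) * s" and eps: "\<epsilon> > 0"
  shows "\<exists>x. (\<forall>i<n. x i > 0) \<and> (\<Sum>i<n. x i) = real n * \<mu> \<and>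
             (\<Sum>i<n. (x i - \<mu>)^2) = real n * (real n - 1) * s^2 \<and> (\<Prod>i<n. x i) < \<epsilon>"
proof -
  define N where "N = real n"
  have n3: "n \<ge> 3"
  proof (rule ccontr)
    assume "\<not> n \<ge> 3"
    then have "n = 2" using n2 by simp
    then show False using big sm by simp
  qed
  have N3: "N \<ge> 3" unfolding N_def using n3 by simp
  have spos: "s > 0" using big mu s0 by (cases "s = 0") auto
  define t0 where "t0 = (N - 1) * (\<mu>^2 - s^2) / (2*\<mu>)"
  have t0: "t0 > 0" unfolding t0_def using N3 mu sm s0
    by (intro divide_pos_pos mult_pos_pos) (auto simp: power_strict_mono)
  define B where "B = (N*\<mu>)^(n-1)"
  have B: "B > 0" unfolding B_def using N3 mu by simp
  define t where "t = min \<mu> (min (t0/2) (\<epsilon>/(2*B)))"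
  have tpos: "t > 0" unfolding t_def using mu t0 eps B by simp
  have tmu: "t \<le> \<mu>" and tt0: "t \<le> t0/2" and teps: "t \<le> \<epsilon>/(2*B)" unfolding t_def by auto
  define m' where "m' = (N*\<mu> - t)/(N-1)"
  define D where "D = N*(N-1)* s^2 - N*(\<mu>-t)^2/(N-1)"
  define s' where "s' = sqrt (D/((N-1)*(N-2)))"
  define a' where "a' = m' - s'"
  define b' where "b' = m' + (N-2)* s'"
  have D0: "D \<ge> 0"
  proof -
    have "(\<mu>-t)^2 \<le> ((N-1)* s)^2" using tmu tpos big unfolding N_def by (intro power_mono) auto
    then have "N*(\<mu>-t)^2/(N-1) \<le> N*((N-1)* s)^2/(N-1)" using N3
      by (intro divide_right_mono mult_left_mono) auto
    also have "\<dots> = N*(N-1)* s^2" using N3 by (simp add: power2_eq_square field_simps)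
    finally show ?thesis unfolding D_def by simp
  qed
  have s'0: "s' \<ge> 0" unfolding s'_def using D0 N3 by simp
  have s'2: "s'^2 = D/((N-1)*(N-2))" unfolding s'_def using D0 N3 by simp
  have "N*\<mu> \<ge> 3*\<mu>" using N3 mu by (intro mult_right_mono) auto
  then have "N*\<mu> - t > 0" using mu tmu by linarith
  then have m'pos: "m' > 0" unfolding m'_def using N3 by (intro divide_pos_pos) auto
  have phi: "(N-1)*(N-2)*(m'^2 - s'^2) = N*(N-1)*(\<mu>^2 - s^2) + 2*t^2 - 2*N*\<mu>*t"
  proof -
    have e1: "(N-1)*m' = N*\<mu> - t" unfolding m'_def using N3 by simp
    have e2: "(N-1)*(N-2)* s'^2 = D" unfolding s'2 using N3 by simp
    have e3: "(N-1)*D = N*(N-1)^2* s^2 - N*(\<mu>-t)^2" unfolding D_def using N3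
      by (simp add: field_simps power2_eq_square)
    have "(N-1)*((N-1)*(N-2)*(m'^2 - s'^2)) = (N-2)*((N-1)*m')^2 - (N-1)*((N-1)*(N-2)* s'^2)"
      by algebra
    also have "\<dots> = (N-2)*(N*\<mu> - t)^2 - (N*(N-1)^2* s^2 - N*(\<mu>-t)^2)" unfolding e1 e2 e3 ..
    also have "\<dots> = (N-1)*(N*(N-1)*(\<mu>^2 - s^2) + 2*t^2 - 2*N*\<mu>*t)" by algebra
    finally show ?thesis using N3 by simp
  qed
  have "2*N*\<mu>*t \<le> N*\<mu>*t0" using tt0 N3 mu by (simp add: mult_left_mono)
  also have "N*\<mu>*t0 = N*(N-1)*(\<mu>^2 - s^2)/2" unfolding t0_def using mu by (simp add: field_simps)
  finally have "2*N*\<mu>*t \<le> N*(N-1)*(\<mu>^2 - s^2)/2" .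
  moreover have "N*(N-1)*(\<mu>^2 - s^2) > 0" using N3 mu sm s0 by (simp add: power_strict_mono)
  ultimately have P: "(N-1)*(N-2)*(m'^2 - s'^2) > 0" unfolding phi using zero_le_power2[of t] by linarith
  have Q: "(N-1)*(N-2) > 0" using N3 by simp
  have "m'^2 - s'^2 > 0" using zero_less_mult_pos[OF P Q] .
  then have "s' < m'" using m'pos s'0 by (smt (verit) power_mono)
  then have a'pos: "a' > 0" unfolding a'_def by simp
  have ns: "(N-2)* s' \<ge> 0" using N3 s'0 by simp
  have b'pos: "b' > 0" unfolding b'_def using m'pos ns by linarith
  have ab': "a' \<le> b'" unfolding a'_def b'_def using s'0 ns by linarith
  define x where "x = (\<lambda>i::nat. if i = 0 then t else if i = 1 then b' else a')"
  have xpos: "\<forall>i<n. x i > 0" unfolding x_def using tpos a'pos b'pos by auto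
  have xS: "(\<Sum>i<n. x i) = N * \<mu>"
  proof -
    have "(\<Sum>i<n. x i) = t + b' + (N-2)*a'" unfolding x_def N_def
      using sum_if01[OF n2, of "\<lambda>t. t" t b' a'] by simp
    also have "\<dots> = t + (N-1)*m'" unfolding a'_def b'_def by (simp add: algebra_simps)
    also have "\<dots> = N*\<mu>" unfolding m'_def using N3 by simp
    finally show ?thesis .
  qed
  have xV: "(\<Sum>i<n. (x i - \<mu>)^2) = N*(N-1)* s^2"
  proof -
    have h1: "(\<Sum>i<n. (x i - \<mu>)^2) = (t-\<mu>)^2 + (b'-\<mu>)^2 + (N-2)*(a'-\<mu>)^2" unfolding x_def N_def
      using sum_if01[OF n2, of "\<lambda>u. (u - \<mu>)^2" t b' a'] by simp
    have h2: "(b'-\<mu>)^2 + (N-2)*(a'-\<mu>)^2 = (N-1)*(m'-\<mu>)^2 + (N-1)*(N-2)* s'^2"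
      unfolding a'_def b'_def by (simp add: power2_eq_square algebra_simps)
    have h3: "(N-1)*(N-2)* s'^2 = D" unfolding s'2 using N3 by simp
    have h4: "(N-1)*(m'-\<mu>) = \<mu> - t" unfolding m'_def using N3 by (simp add: field_simps)
    have h5: "(N-1)*D = N*(N-1)^2* s^2 - N*(\<mu>-t)^2" unfolding D_def using N3
      by (simp add: field_simps power2_eq_square)
    have "(\<Sum>i<n. (x i - \<mu>)^2) = (t-\<mu>)^2 + (N-1)*(m'-\<mu>)^2 + D" using h1 h2 h3 by linarith
    then have "(N-1)*(\<Sum>i<n. (x i - \<mu>)^2) = (N-1)*((t-\<mu>)^2 + (N-1)*(m'-\<mu>)^2 + D)" by simp
    also have "\<dots> = (N-1)*(t-\<mu>)^2 + ((N-1)*(m'-\<mu>))^2 + (N-1)*D" by algebra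
    also have "\<dots> = (N-1)*(t-\<mu>)^2 + (\<mu> - t)^2 + (N*(N-1)^2* s^2 - N*(\<mu>-t)^2)" unfolding h4 h5 ..
    also have "\<dots> = (N-1)*(N*(N-1)* s^2)" by algebra
    finally show ?thesis using N3 by simp
  qed
  have b'le: "b' \<le> N*\<mu>"
  proof -
    have "t + b' + (N-2)*a' = N*\<mu>" using xS unfolding x_def N_def
      using sum_if01[OF n2, of "\<lambda>t. t" t b' a'] by simp
    then show ?thesis using tpos a'pos N3 by (smt (verit) mult_nonneg_nonneg)
  qed
  have "(\<Prod>i<n. x i) = t * b' * a'^(n-2)" unfolding x_def by (rule prod_if01[OF n2])
  also have "\<dots> \<le> t * (N*\<mu>) * (N*\<mu>)^(n-2)"
    using tpos a'pos b'pos ab' b'le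
    by (intro mult_mono mult_left_mono power_mono) auto
  also have "\<dots> = t * B"
  proof -
    have e: "n - 1 = Suc (n - 2)" using n3 by simp
    show ?thesis unfolding B_def e by (simp add: mult.assoc)
  qed
  also have "\<dots> \<le> \<epsilon>/2" using teps B by (simp add: field_simps)
  also have "\<dots> < \<epsilon>" using eps by simp
  finally show ?thesis using xpos xS xV unfolding N_def by blast
qed


lemma partA1:
  assumes n2: "n \<ge> 2" and H: "mean n x > 0" "sdev n x / mean n x < 1 / sqrt (real n - 1)"
  shows "(\<forall>i<n. x i > 0) \<and> lower_bd n (mean n x) (sdev n x) \<le> (\<Prod>i<n. x i) \<and>
        (\<Prod>i<n. x i) \<le> upper_bd n (mean n x) (sdev n x)"
proof -
  define \<mu> where "\<mu> = mean n x"
  define \<sigma> where "\<sigma> = sdev n x"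
  define r where "r = sqrt (real n - 1)"
  define s where "s = \<sigma> / r"
  have r: "r > 0" unfolding r_def using sqrt_id[OF n2] by simp
  have S: "(\<Sum>i<n. x i) = real n * \<mu>" unfolding \<mu>_def by (rule stats(1)[OF n2])
  have V: "(\<Sum>i<n. (x i - \<mu>)^2) = real n * (real n - 1) * s^2"
    unfolding \<mu>_def s_def \<sigma>_def r_def by (rule stats(2)[OF n2])
  have \<sigma>0: "\<sigma> \<ge> 0" unfolding \<sigma>_def by (rule stats(3)[OF n2])
  have s0: "s \<ge> 0" unfolding s_def using \<sigma>0 r by simp
  have mu: "\<mu> > 0" using H unfolding \<mu>_def by simp
  have "\<sigma> * r < \<mu>" using H(2) mu r unfolding \<mu>_def[symmetric] \<sigma>_def[symmetric] r_def[symmetric]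
    by (simp add: field_simps)
  then have sm: "(real n - 1) * s < \<mu>" unfolding s_def r_def using sqrt_id(1)[OF n2] by simp
  have pos: "\<forall>i<n. x i > 0"
  proof (intro allI impI)
    fix i assume "i < n"
    then have "\<bar>x i - \<mu>\<bar> \<le> (real n - 1) * s" by (rule samuelson2[OF n2 S V s0])
    then show "x i > 0" using sm by linarith
  qed
  have "s \<le> (real n - 1) * s" using s0 n2 by (simp add: mult_le_cancel_right1)
  then have sm2: "s < \<mu>" using sm by linarith
  have L: "lower_bd n \<mu> \<sigma> \<le> (\<Prod>i<n. x i)"
    unfolding bd_eq[OF n2] s_def[unfolded r_def, symmetric] by (rule lower_core[OF n2 S V s0 sm])
  have U: "(\<Prod>i<n. x i) \<le> upper_bd n \<mu> \<sigma>"
    unfolding bd_eq[OF n2] s_def[unfolded r_def, symmetric] by (rule upper_core[OF n2 pos S V s0 sm2])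
  show ?thesis using pos L U unfolding \<mu>_def \<sigma>_def by simp
qed

lemma sumsq_lt:
  fixes x :: "nat \<Rightarrow> real"
  assumes n2: "n \<ge> 2" and pos: "\<forall>i<n. x i > 0"
  shows "(\<Sum>i<n. (x i)^2) < (\<Sum>i<n. x i)^2"
proof -
  have lt: "x i < (\<Sum>i<n. x i)" if i: "i < n" for i
  proof -
    have "(\<Sum>i<n. x i) = x i + (\<Sum>j\<in>{..<n}-{i}. x j)" using i by (simp add: sum.remove)
    moreover have "(\<Sum>j\<in>{..<n}-{i}. x j) > 0"
    proof (rule sum_pos)
      show "finite ({..<n}-{i})" by simp
      have "(if i = 0 then 1 else 0) \<in> {..<n}-{i}" using n2 i by auto
      then show "{..<n}-{i} \<noteq> {}" by blast
      show "\<And>j. j \<in> {..<n}-{i} \<Longrightarrow> 0 < x j" using pos by auto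
    qed
    ultimately show ?thesis by simp
  qed
  have "(\<Sum>i<n. (x i)^2) < (\<Sum>i<n. x i * (\<Sum>j<n. x j))"
  proof (rule sum_strict_mono)
    show "finite {..<n}" by simp
    have "(0::nat) \<in> {..<n}" using n2 by simp
    then show "{..<n} \<noteq> {}" by blast
    fix i assume "i \<in> {..<n}"
    then show "(x i)^2 < x i * (\<Sum>j<n. x j)" using lt pos by (simp add: power2_eq_square)
  qed
  also have "\<dots> = (\<Sum>i<n. x i)^2" by (simp add: sum_distrib_right power2_eq_square)
  finally show ?thesis .
qed

lemma dev_expand:
  fixes x :: "nat \<Rightarrow> real"
  assumes S: "(\<Sum>i<n. x i) = real n * \<mu>"
  shows "(\<Sum>i<n. (x i - \<mu>)^2) = (\<Sum>i<n. (x i)^2) - real n * \<mu>^2"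
proof -
  have "(\<Sum>i<n. (x i - \<mu>)^2) = (\<Sum>i<n. (x i)^2 - 2*\<mu>*x i + \<mu>^2)"
    by (intro sum.cong) (auto simp: power2_eq_square algebra_simps)
  also have "\<dots> = (\<Sum>i<n. (x i)^2) - 2*\<mu>*(\<Sum>i<n. x i) + real n * \<mu>^2"
    by (simp add: sum.distrib sum_subtractf sum_distrib_left)
  finally show ?thesis using S by (simp add: power2_eq_square)
qed

lemma partB1:
  assumes n2: "n \<ge> 2" and pos: "\<forall>i<n. x i > 0"
  shows "0 \<le> sdev n x / mean n x \<and> sdev n x / mean n x < sqrt (real n - 1) \<and>
        lower_bd n (mean n x) (sdev n x) \<le> (\<Prod>i<n. x i) \<and>
        (\<Prod>i<n. x i) \<le> upper_bd n (mean n x) (sdev n x)"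
proof -
  define \<mu> where "\<mu> = mean n x"
  define \<sigma> where "\<sigma> = sdev n x"
  define r where "r = sqrt (real n - 1)"
  define s where "s = \<sigma> / r"
  have r: "r > 0" unfolding r_def using sqrt_id[OF n2] by simp
  have r2: "r^2 = real n - 1" unfolding r_def using sqrt_id[OF n2] by simp
  have S: "(\<Sum>i<n. x i) = real n * \<mu>" unfolding \<mu>_def by (rule stats(1)[OF n2])
  have V: "(\<Sum>i<n. (x i - \<mu>)^2) = real n * (real n - 1) * s^2"
    unfolding \<mu>_def s_def \<sigma>_def r_def by (rule stats(2)[OF n2])
  have \<sigma>0: "\<sigma> \<ge> 0" unfolding \<sigma>_def by (rule stats(3)[OF n2])
  have s0: "s \<ge> 0" unfolding s_def using \<sigma>0 r by simp
  have n0: "real n > 0" using n2 by simp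
  have "(0::nat) \<in> {..<n}" using n2 by simp
  then have "(\<Sum>i<n. x i) > 0" using pos by (intro sum_pos) auto
  then have mu: "\<mu> > 0" using S n0 by (simp add: zero_less_mult_iff)
  have sig2: "\<sigma>^2 = (real n - 1) * s^2" unfolding s_def using r r2 n2 by (simp add: power_divide)
  have "real n * \<sigma>^2 = (\<Sum>i<n. (x i)^2) - real n * \<mu>^2"
    using V dev_expand[OF S] sig2 by simp
  also have "\<dots> < (real n * \<mu>)^2 - real n * \<mu>^2" using sumsq_lt[OF n2 pos] S by simp
  also have "\<dots> = real n * ((r * \<mu>)^2)" unfolding power_mult_distrib r2 by (simp add: power2_eq_square algebra_simps)
  finally have sq: "\<sigma>^2 < (r*\<mu>)^2" using n0 by simp
  have rm: "0 \<le> r*\<mu>" using r mu by simp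
  have sr: "\<sigma> < r * \<mu>" using power_less_imp_less_base[OF sq rm] .
  have c1: "0 \<le> \<sigma> / \<mu>" using \<sigma>0 mu by simp
  have c2: "\<sigma> / \<mu> < r" using sr mu by (simp add: divide_less_eq mult.commute)
  have sm2: "s < \<mu>" unfolding s_def using sr r by (simp add: divide_less_eq mult.commute)
  have U: "(\<Prod>i<n. x i) \<le> upper_bd n \<mu> \<sigma>"
    unfolding bd_eq[OF n2] s_def[unfolded r_def, symmetric] by (rule upper_core[OF n2 pos S V s0 sm2])
  have L: "lower_bd n \<mu> \<sigma> \<le> (\<Prod>i<n. x i)"
  proof (cases "(real n - 1) * s < \<mu>")
    case True
    show ?thesis unfolding bd_eq[OF n2] s_def[unfolded r_def, symmetric] by (rule lower_core[OF n2 S V s0 True])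
  next
    case False
    have "lower_bd n \<mu> \<sigma> = (\<mu> - (real n - 1) * s) * (\<mu> + s)^(n-1)"
      unfolding bd_eq[OF n2] s_def r_def ..
    also have "\<dots> \<le> 0" using False mu s0 by (intro mult_nonpos_nonneg) auto
    also have "0 \<le> (\<Prod>i<n. x i)" using pos by (intro prod_nonneg) (auto simp: less_imp_le)
    finally show ?thesis .
  qed
  show ?thesis using c1 c2 U L unfolding \<mu>_def \<sigma>_def r_def by simp
qed


lemma sr_conv:
  assumes n2: "n \<ge> 2" and mu: "\<mu> > 0" and "\<sigma> / \<mu> < sqrt (real n - 1)"
  shows "\<sigma> / sqrt (real n - 1) < \<mu>"
proof -
  have r: "sqrt (real n - 1) > 0" using sqrt_id[OF n2] by simp
  have "\<sigma> < sqrt (real n - 1) * \<mu>" using assms(3) mu by (simp add: divide_less_eq mult.commute)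
  then show ?thesis using r by (simp add: divide_less_eq mult.commute)
qed

lemma partB_inf:
  assumes n2: "n \<ge> 2" and mu: "\<mu> > 0" and \<sigma>0: "\<sigma> \<ge> 0" and c: "\<sigma> / \<mu> < sqrt (real n - 1)"
  shows "max 0 (lower_bd n \<mu> \<sigma>) =
          Inf {(\<Prod>i<n. x i) | x. (\<forall>i<n. x i > 0) \<and> mean n x = \<mu> \<and> variance n x = \<sigma>^2}"
proof -
  define r where "r = sqrt (real n - 1)"
  define s where "s = \<sigma> / r"
  have r: "r > 0" unfolding r_def using sqrt_id[OF n2] by simp
  have s0: "s \<ge> 0" unfolding s_def using \<sigma>0 r by simp
  have sm: "s < \<mu>" unfolding s_def r_def by (rule sr_conv[OF n2 mu c])
  have n0: "n > 0" using n2 by simp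
  define X where "X = {(\<Prod>i<n. x i) | x. (\<forall>i<n. x i > 0) \<and> mean n x = \<mu> \<and> variance n x = \<sigma>^2}"
  have sd: "sdev n x = \<sigma>" if "variance n x = \<sigma>^2" for x unfolding sdev_def that using \<sigma>0 by simp
  have lowX: "max 0 (lower_bd n \<mu> \<sigma>) \<le> y" if yX: "y \<in> X" for y
  proof -
    obtain x where x: "y = (\<Prod>i<n. x i)" "\<forall>i<n. x i > 0" "mean n x = \<mu>" "variance n x = \<sigma>^2"
      using yX unfolding X_def by blast
    have "lower_bd n \<mu> \<sigma> \<le> y" using partB1[OF n2 x(2)] x sd by simp
    moreover have "0 \<le> y" unfolding x(1) using x(2) by (intro prod_nonneg) (auto simp: less_imp_le)
    ultimately show ?thesis by simp
  qed
  define zu where "zu = (\<lambda>i::nat. if i = 0 then \<mu> + (real n - 1) * (\<sigma> / sqrt (real n - 1)) else \<mu> - \<sigma> / sqrt (real n - 1))"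
  have zupos: "\<forall>i<n. zu i > 0"
  proof -
    have "(real n - 1) * s \<ge> 0" using n2 s0 by simp
    then show ?thesis unfolding zu_def using sm mu unfolding s_def r_def by auto
  qed
  have e: "mean n zu = \<mu>" "variance n zu = \<sigma>^2"
    unfolding zu_def by (rule ext_cfg(4)[OF n2], rule ext_cfg(5)[OF n2])
  have zuX: "(\<Prod>i<n. zu i) \<in> X" unfolding X_def using zupos e by blast
  show ?thesis unfolding X_def[symmetric]
  proof (cases "(real n - 1) * s < \<mu>")
    case True
    define zl where "zl = (\<lambda>i::nat. if i = 0 then \<mu> - (real n - 1) * (\<sigma> / sqrt (real n - 1)) else \<mu> + \<sigma> / sqrt (real n - 1))"
    have zlpos: "\<forall>i<n. zl i > 0" unfolding zl_def using True mu s0 unfolding s_def r_def by auto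
    have e: "mean n zl = \<mu>" "variance n zl = \<sigma>^2" "(\<Prod>i<n. zl i) = lower_bd n \<mu> \<sigma>"
      unfolding zl_def by (rule ext_cfg(1)[OF n2], rule ext_cfg(2)[OF n2], rule ext_cfg(3)[OF n2])
    have zlX: "lower_bd n \<mu> \<sigma> \<in> X" unfolding X_def using zlpos e by force
    have Lpos: "lower_bd n \<mu> \<sigma> > 0"
    proof -
      have "lower_bd n \<mu> \<sigma> = (\<mu> - (real n - 1) * s) * (\<mu> + s)^(n-1)"
        unfolding bd_eq[OF n2] s_def r_def ..
      also have "\<dots> > 0" using True mu s0 by simp
      finally show ?thesis .
    qed
    have "Inf X = lower_bd n \<mu> \<sigma>"
      by (rule cInf_eq_minimum[OF zlX]) (use lowX Lpos in auto)
    then show "max 0 (lower_bd n \<mu> \<sigma>) = Inf X" using Lpos by simp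
  next
    case False
    have Lneg: "lower_bd n \<mu> \<sigma> \<le> 0"
    proof -
      have "lower_bd n \<mu> \<sigma> = (\<mu> - (real n - 1) * s) * (\<mu> + s)^(n-1)"
        unfolding bd_eq[OF n2] s_def r_def ..
      also have "\<dots> \<le> 0" using False mu s0 by (intro mult_nonpos_nonneg) auto
      finally show ?thesis .
    qed
    have "Inf X = 0"
    proof (rule cInf_eq_non_empty)
      show "X \<noteq> {}" using zuX by blast
      show "\<And>x. x \<in> X \<Longrightarrow> 0 \<le> x" using lowX by force
      fix y assume yl: "\<And>x. x \<in> X \<Longrightarrow> y \<le> x"
      show "y \<le> 0"
      proof (rule ccontr)
        assume "\<not> y \<le> 0"
        then have y0: "y > 0" by simp
        have big: "\<mu> \<le> (real n - 1) * s" using False by simp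
        obtain x where x: "\<forall>i<n. x i > 0" "(\<Sum>i<n. x i) = real n * \<mu>"
          "(\<Sum>i<n. (x i - \<mu>)^2) = real n * (real n - 1) * s^2" "(\<Prod>i<n. x i) < y"
          using small_cfg[OF n2 mu s0 sm big y0] by blast
        have sig2: "\<sigma>^2 = (real n - 1) * s^2" unfolding s_def r_def using sqrt_id[OF n2] n2
          by (simp add: power_divide)
        have "mean n x = \<mu>" "variance n x = real n * (real n - 1) * s^2 / real n"
          using mv[OF n0 x(2) x(3)] by auto
        then have "mean n x = \<mu>" "variance n x = \<sigma>^2" using sig2 n0 by auto
        then have "(\<Prod>i<n. x i) \<in> X" unfolding X_def using x(1) by blast
        then show False using yl x(4) by force
      qed
    qed
    then show "max 0 (lower_bd n \<mu> \<sigma>) = Inf X" using Lneg by simp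
  qed
qed

theorem theorem1:
  fixes n :: nat
  assumes "n \<ge> 2"
  shows
    \<comment> \<open>(a) bounds\<close>
    "(\<forall>x. mean n x > 0 \<and> sdev n x / mean n x < 1 / sqrt (real n - 1) \<longrightarrow>
        (\<forall>i<n. x i > 0) \<and>
        lower_bd n (mean n x) (sdev n x) \<le> (\<Prod>i<n. x i) \<and>
        (\<Prod>i<n. x i) \<le> upper_bd n (mean n x) (sdev n x))
   \<and>
    \<comment> \<open>(a) sharpness\<close>
    (\<forall>\<mu> \<sigma>. \<mu> > 0 \<and> 0 \<le> \<sigma> / \<mu> \<and> \<sigma> \<ge> 0 \<and> \<sigma> / \<mu> < 1 / sqrt (real n - 1) \<longrightarrow>
        (\<exists>x. mean n x = \<mu> \<and> variance n x = \<sigma>^2 \<and> (\<Prod>i<n. x i) = lower_bd n \<mu> \<sigma>) \<and>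
        (\<exists>x. mean n x = \<mu> \<and> variance n x = \<sigma>^2 \<and> (\<Prod>i<n. x i) = upper_bd n \<mu> \<sigma>))
   \<and>
    \<comment> \<open>(b) bounds for positive sequences\<close>
    (\<forall>x. (\<forall>i<n. x i > 0) \<longrightarrow>
        0 \<le> sdev n x / mean n x \<and> sdev n x / mean n x < sqrt (real n - 1) \<and>
        lower_bd n (mean n x) (sdev n x) \<le> (\<Prod>i<n. x i) \<and>
        (\<Prod>i<n. x i) \<le> upper_bd n (mean n x) (sdev n x))
   \<and>
    \<comment> \<open>(b) sharpness of the upper bound\<close>
    (\<forall>\<mu> \<sigma>. \<mu> > 0 \<and> \<sigma> \<ge> 0 \<and> \<sigma> / \<mu> < sqrt (real n - 1) \<longrightarrow>
        (\<exists>x. (\<forall>i<n. x i > 0) \<and> mean n x = \<mu> \<and> variance n x = \<sigma>^2 \<and>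
             (\<Prod>i<n. x i) = upper_bd n \<mu> \<sigma>))
   \<and>
    \<comment> \<open>(b) negativity of the lower bound expression\<close>
    (\<forall>\<mu> \<sigma>. \<mu> > 0 \<and> 1 / sqrt (real n - 1) < \<sigma> / \<mu> \<and> \<sigma> / \<mu> < sqrt (real n - 1) \<longrightarrow>
        lower_bd n \<mu> \<sigma> < 0)
   \<and>
    \<comment> \<open>(b) max(0, lower bound) is the infimum\<close>
    (\<forall>\<mu> \<sigma>. \<mu> > 0 \<and> \<sigma> \<ge> 0 \<and> \<sigma> / \<mu> < sqrt (real n - 1) \<longrightarrow>
        max 0 (lower_bd n \<mu> \<sigma>) =
          Inf {(\<Prod>i<n. x i) | x. (\<forall>i<n. x i > 0) \<and> mean n x = \<mu> \<and> variance n x = \<sigma>^2})"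
proof -
  note n2 = assms
  have r: "sqrt (real n - 1) > 0" using sqrt_id[OF n2] by simp
  have P1: "\<forall>x. mean n x > 0 \<and> sdev n x / mean n x < 1 / sqrt (real n - 1) \<longrightarrow>
        (\<forall>i<n. x i > 0) \<and>
        lower_bd n (mean n x) (sdev n x) \<le> (\<Prod>i<n. x i) \<and>
        (\<Prod>i<n. x i) \<le> upper_bd n (mean n x) (sdev n x)"
    using partA1[OF n2] by blast
  have P2: "\<forall>\<mu> \<sigma>. \<mu> > 0 \<and> 0 \<le> \<sigma> / \<mu> \<and> \<sigma> \<ge> 0 \<and> \<sigma> / \<mu> < 1 / sqrt (real n - 1) \<longrightarrow>
        (\<exists>x. mean n x = \<mu> \<and> variance n x = \<sigma>^2 \<and> (\<Prod>i<n. x i) = lower_bd n \<mu> \<sigma>) \<and>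
        (\<exists>x. mean n x = \<mu> \<and> variance n x = \<sigma>^2 \<and> (\<Prod>i<n. x i) = upper_bd n \<mu> \<sigma>)"
  proof (intro allI impI conjI)
    fix \<mu> \<sigma> :: real
    show "\<exists>x. mean n x = \<mu> \<and> variance n x = \<sigma>^2 \<and> (\<Prod>i<n. x i) = lower_bd n \<mu> \<sigma>"
      using ext_cfg(1,2,3)[OF n2, of \<mu> \<sigma>] by blast
    show "\<exists>x. mean n x = \<mu> \<and> variance n x = \<sigma>^2 \<and> (\<Prod>i<n. x i) = upper_bd n \<mu> \<sigma>"
      using ext_cfg(4,5,6)[OF n2, of \<mu> \<sigma>] by blast
  qed
  have P3: "\<forall>x. (\<forall>i<n. x i > 0) \<longrightarrow>
        0 \<le> sdev n x / mean n x \<and> sdev n x / mean n x < sqrt (real n - 1) \<and>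
        lower_bd n (mean n x) (sdev n x) \<le> (\<Prod>i<n. x i) \<and>
        (\<Prod>i<n. x i) \<le> upper_bd n (mean n x) (sdev n x)"
    using partB1[OF n2] by blast
  have P4: "\<forall>\<mu> \<sigma>. \<mu> > 0 \<and> \<sigma> \<ge> 0 \<and> \<sigma> / \<mu> < sqrt (real n - 1) \<longrightarrow>
        (\<exists>x. (\<forall>i<n. x i > 0) \<and> mean n x = \<mu> \<and> variance n x = \<sigma>^2 \<and>
             (\<Prod>i<n. x i) = upper_bd n \<mu> \<sigma>)"
  proof (intro allI impI)
    fix \<mu> \<sigma> :: real
    assume H: "\<mu> > 0 \<and> \<sigma> \<ge> 0 \<and> \<sigma> / \<mu> < sqrt (real n - 1)"
    define s where "s = \<sigma> / sqrt (real n - 1)"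
    have sm: "s < \<mu>" unfolding s_def using sr_conv[OF n2] H by blast
    have s0: "s \<ge> 0" unfolding s_def using H r by simp
    have "(real n - 1) * s \<ge> 0" using n2 s0 by simp
    then have pos: "\<forall>i<n. (if i = 0 then \<mu> + (real n - 1) * s else \<mu> - s) > 0"
      using sm H by auto
    define z where "z = (\<lambda>i::nat. if i = 0 then \<mu> + (real n - 1) * s else \<mu> - s)"
    have e: "mean n z = \<mu>" "variance n z = \<sigma>^2" "(\<Prod>i<n. z i) = upper_bd n \<mu> \<sigma>"
      unfolding z_def s_def by (rule ext_cfg(4)[OF n2], rule ext_cfg(5)[OF n2], rule ext_cfg(6)[OF n2])
    have zp: "\<forall>i<n. z i > 0" unfolding z_def using pos .
    show "\<exists>x. (\<forall>i<n. x i > 0) \<and> mean n x = \<mu> \<and> variance n x = \<sigma>^2 \<and>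
             (\<Prod>i<n. x i) = upper_bd n \<mu> \<sigma>"
      using zp e by (intro exI[of _ z]) simp
  qed
  have P5: "\<forall>\<mu> \<sigma>. \<mu> > 0 \<and> 1 / sqrt (real n - 1) < \<sigma> / \<mu> \<and> \<sigma> / \<mu> < sqrt (real n - 1) \<longrightarrow>
        lower_bd n \<mu> \<sigma> < 0"
  proof (intro allI impI)
    fix \<mu> \<sigma> :: real
    assume H: "\<mu> > 0 \<and> 1 / sqrt (real n - 1) < \<sigma> / \<mu> \<and> \<sigma> / \<mu> < sqrt (real n - 1)"
    define s where "s = \<sigma> / sqrt (real n - 1)"
    have sm: "s < \<mu>" unfolding s_def using sr_conv[OF n2] H by blast
    have h: "1 / sqrt (real n - 1) < \<sigma> / \<mu>" using H by simp
    have mu: "\<mu> > 0" using H by simp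
    have "\<mu> * (1 / sqrt (real n - 1)) < \<mu> * (\<sigma> / \<mu>)" by (rule mult_strict_left_mono[OF h mu])
    then have "\<mu> / sqrt (real n - 1) < \<sigma>" using mu by simp
    then have "\<mu> < \<sigma> * sqrt (real n - 1)" using r by (simp add: divide_less_eq)
    then have big: "\<mu> < (real n - 1) * s" unfolding s_def sqrt_id(1)[OF n2] .
    have "\<sigma> > 0" using H r by (smt (verit) divide_nonpos_pos divide_pos_pos)
    then have s0: "s > 0" unfolding s_def using r by simp
    have "lower_bd n \<mu> \<sigma> = (\<mu> - (real n - 1) * s) * (\<mu> + s)^(n-1)"
      unfolding bd_eq[OF n2] s_def ..
    also have "\<dots> < 0" using big H s0 by (intro mult_neg_pos) auto
    finally show "lower_bd n \<mu> \<sigma> < 0" .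
  qed
  have P6: "\<forall>\<mu> \<sigma>. \<mu> > 0 \<and> \<sigma> \<ge> 0 \<and> \<sigma> / \<mu> < sqrt (real n - 1) \<longrightarrow>
        max 0 (lower_bd n \<mu> \<sigma>) =
          Inf {(\<Prod>i<n. x i) | x. (\<forall>i<n. x i > 0) \<and> mean n x = \<mu> \<and> variance n x = \<sigma>^2}"
    using partB_inf[OF n2] by blast
  show ?thesis using P1 P2 P3 P4 P5 P6 by blast
qed

end
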